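(* Let $n$ be a positive integer. Then $V(n,2)\neq\emptyset$ if and only if $n=4k$ or $n=4k+1$ for some positive integer $k$.
   Context: Let $S=K[x_1,\ldots,x_n]$ over a field $K$. $V(n,2)$ is the set of $f$-ideals of $S$ of degree $2$, i.e. square-free monomial ideals $I$ all of whose minimal monomial generators have degree $2$ and which are $f$-ideals. Here, with $\sigma$ the bijection $x_{i_1}\cdots x_{i_k}\mapsto\{i_1,\ldots,i_k\}$ from square-free monomials to subsets of $[n]$, the facet complex $\delta_{\mathcal{F}}(I)$ is the simplicial complex with facets $\sigma(g)$ for $g$ in the minimal generating set $G(I)$, the Stanley–Reisner complex is $\delta_{\mathcal{N}}(I)=\{\sigma(g)\mid g \text{ square-free monomial},\ g\notin I\}$, and $I$ is an $f$-ideal if these two complexes have the same $f$-vector. *)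

theory Defs
  imports Main
begin

text \<open>A square-free monomial x_{i1}...x_{ik} of S = K[x_1..x_n] is identified with
  its support {i1,...,ik} (the bijection sigma). A square-free monomial ideal I is
  represented by sigma of its minimal monomial generating set G(I), a set of subsets
  of {1..n}. The field K plays no role.\<close>

definition sqfree_monomials :: "nat \<Rightarrow> nat set set" where
  "sqfree_monomials n = Pow {1..n}"

definition in_monomial_ideal :: "nat set set \<Rightarrow> nat set \<Rightarrow> bool" where
  "in_monomial_ideal G F \<longleftrightarrow> (\<exists>g\<in>G. g \<subseteq> F)"

definition facet_complex :: "nat set set \<Rightarrow> nat set set" where
  "facet_complex G = {F. \<exists>g\<in>G. F \<subseteq> g}"

definition SR_complex :: "nat \<Rightarrow> nat set set \<Rightarrow> nat set set" where
  "SR_complex n G = {F \<in> sqfree_monomials n. \<not> in_monomial_ideal G F}"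

text \<open>f-vector entry: number of faces with k vertices (i.e. f_{k-1}).\<close>
definition fnum :: "nat set set \<Rightarrow> nat \<Rightarrow> nat" where
  "fnum \<Delta> k = card {F \<in> \<Delta>. card F = k}"

definition same_f_vector :: "nat set set \<Rightarrow> nat set set \<Rightarrow> bool" where
  "same_f_vector \<Delta>1 \<Delta>2 \<longleftrightarrow> (\<forall>k. fnum \<Delta>1 k = fnum \<Delta>2 k)"

definition sqfree_gen_set :: "nat \<Rightarrow> nat set set \<Rightarrow> bool" where
  "sqfree_gen_set n G \<longleftrightarrow> G \<subseteq> sqfree_monomials n \<and>
     (\<forall>g\<in>G. \<forall>h\<in>G. g \<subseteq> h \<longrightarrow> g = h)"

definition f_ideal :: "nat \<Rightarrow> nat set set \<Rightarrow> bool" where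
  "f_ideal n G \<longleftrightarrow> same_f_vector (facet_complex G) (SR_complex n G)"

definition V :: "nat \<Rightarrow> nat \<Rightarrow> nat set set set" where
  "V n d = {G. sqfree_gen_set n G \<and> (\<forall>g\<in>G. card g = d) \<and> f_ideal n G}"

end

theory Submission
  imports Defs
begin

definition P2 :: "nat \<Rightarrow> nat set set" where
  "P2 n = {F. F \<subseteq> {1..n} \<and> card F = 2}"

lemma card_P2: "card (P2 n) = n * (n - 1) div 2"
proof -
  have "card (P2 n) = card {1..n} choose 2" unfolding P2_def by (rule n_subsets) simp
  thus ?thesis by (simp add: choose_two)
qed

lemma finite_P2: "finite (P2 n)"
  unfolding P2_def by (rule finite_subset[of _ "Pow {1..n}"]) auto

lemma facet2:
  assumes "\<forall>g\<in>G. card g = 2"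
  shows "{F \<in> facet_complex G. card F = 2} = G"
proof
  show "{F \<in> facet_complex G. card F = 2} \<subseteq> G"
  proof
    fix F assume "F \<in> {F \<in> facet_complex G. card F = 2}"
    then obtain g where g: "g \<in> G" "F \<subseteq> g" "card F = 2" unfolding facet_complex_def by auto
    have "card g = 2" using assms g by auto
    hence "finite g" by (metis card.infinite zero_neq_numeral)
    hence "F = g" using g \<open>card g = 2\<close> card_subset_eq by metis
    thus "F \<in> G" using g by simp
  qed
  show "G \<subseteq> {F \<in> facet_complex G. card F = 2}"
    using assms unfolding facet_complex_def by auto
qed

lemma SR2:
  assumes "G \<subseteq> P2 n"
  shows "{F \<in> SR_complex n G. card F = 2} = P2 n - G"
proof
  show "{F \<in> SR_complex n G. card F = 2} \<subseteq> P2 n - G"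
  proof
    fix F assume F: "F \<in> {F \<in> SR_complex n G. card F = 2}"
    hence "F \<subseteq> {1..n}" "card F = 2" "\<not> (\<exists>g\<in>G. g \<subseteq> F)"
      unfolding SR_complex_def sqfree_monomials_def in_monomial_ideal_def by auto
    thus "F \<in> P2 n - G" unfolding P2_def by blast
  qed
  show "P2 n - G \<subseteq> {F \<in> SR_complex n G. card F = 2}"
  proof
    fix F assume F: "F \<in> P2 n - G"
    have fin: "finite F" using F unfolding P2_def by (auto intro: finite_subset)
    have "\<not> (\<exists>g\<in>G. g \<subseteq> F)"
    proof
      assume "\<exists>g\<in>G. g \<subseteq> F"
      then obtain g where "g \<in> G" "g \<subseteq> F" by auto
      moreover have "card g = 2" using \<open>g \<in> G\<close> assms unfolding P2_def by auto
      moreover have "card F = 2" using F unfolding P2_def by simp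
      ultimately have "g = F" using card_subset_eq[OF fin] by simp
      thus False using F \<open>g \<in> G\<close> by auto
    qed
    thus "F \<in> {F \<in> SR_complex n G. card F = 2}"
      using F unfolding SR_complex_def P2_def sqfree_monomials_def in_monomial_ideal_def by auto
  qed
qed

lemma V_P2: assumes "G \<in> V n 2" shows "G \<subseteq> P2 n"
  using assms unfolding V_def sqfree_gen_set_def sqfree_monomials_def P2_def by auto

lemma converse_aux:
  assumes "G \<in> V n 2"
  shows "G \<noteq> {} \<and> 4 * card G = n * (n - 1) div 2 * 2"
proof -
  have sub: "G \<subseteq> P2 n" using V_P2 assms .
  have c2: "\<forall>g\<in>G. card g = 2" using assms unfolding V_def by auto
  have fv: "\<And>k. fnum (facet_complex G) k = fnum (SR_complex n G) k"
    using assms unfolding V_def f_ideal_def same_f_vector_def by auto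
  have ne: "G \<noteq> {}"
  proof
    assume "G = {}"
    hence "fnum (facet_complex G) 0 = 0" unfolding facet_complex_def fnum_def by simp
    moreover have "{} \<in> {F \<in> SR_complex n G. card F = 0}"
      using \<open>G = {}\<close> unfolding SR_complex_def sqfree_monomials_def in_monomial_ideal_def by auto
    moreover have "finite {F \<in> SR_complex n G. card F = 0}"
      unfolding SR_complex_def sqfree_monomials_def by auto
    ultimately show False using fv[of 0] unfolding fnum_def
      by (metis card_0_eq empty_iff)
  qed
  have "card G = card (P2 n - G)"
    using fv[of 2] facet2[OF c2] SR2[OF sub] unfolding fnum_def by simp
  also have "\<dots> = card (P2 n) - card G" using sub finite_P2 by (simp add: card_Diff_subset finite_subset)
  finally have "2 * card G = card (P2 n)" using card_mono[OF finite_P2 sub] by simp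
  thus ?thesis using ne card_P2 by simp
qed


lemma arith_conv:
  fixes n c :: nat
  assumes "c \<ge> 1" "4 * c = n * (n - 1) div 2 * 2"
  shows "\<exists>k::nat. k > 0 \<and> (n = 4 * k \<or> n = 4 * k + 1)"
proof -
  have ev: "even (n * (n - 1))" by (cases "even n") auto
  hence eq: "4 * c = n * (n - 1)" using assms(2) by simp
  have no2: "\<And>X. 4 * c \<noteq> 4 * X + 2" by presburger
  define q where "q = n div 4"
  define r where "r = n mod 4"
  have n: "n = 4 * q + r" unfolding q_def r_def by simp
  have "r < 4" unfolding r_def by simp
  hence "r = 0 \<or> r = 1 \<or> r = 2 \<or> r = 3" by auto
  moreover have "r \<noteq> 2"
  proof
    assume "r = 2"
    hence "n * (n - 1) = 4 * (4*q*q + 3*q) + 2" using n by (simp add: algebra_simps)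
    thus False using eq no2 by metis
  qed
  moreover have "r \<noteq> 3"
  proof
    assume "r = 3"
    hence "n * (n - 1) = 4 * (4*q*q + 5*q + 1) + 2" using n by (simp add: algebra_simps)
    thus False using eq no2 by metis
  qed
  ultimately have r01: "r = 0 \<or> r = 1" by blast
  have "q > 0"
  proof (rule ccontr)
    assume "\<not> q > 0" hence "q = 0" by simp
    hence "n = 0 \<or> n = 1" using n r01 by auto
    hence "n * (n - 1) = 0" by auto
    hence "4 * c = 0" using eq by presburger
    thus False using assms(1) by simp
  qed
  thus ?thesis using n r01 by auto
qed

definition Sset :: "nat \<Rightarrow> nat \<Rightarrow> (nat \<times> nat) set" where
  "Sset n k = ({1..2*k} \<times> {2*k+1..n}) - (\<lambda>i. (i, i + 2*k)) ` {1..k}"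

definition Hset :: "nat \<Rightarrow> nat \<Rightarrow> nat set set" where
  "Hset n k = (\<lambda>(i,j). {i,j}) ` Sset n k"

lemma cross:
  assumes "X \<in> Hset n k" "x \<in> X" "y \<in> X" "x \<noteq> y"
  shows "(x \<le> 2*k) \<noteq> (y \<le> 2*k)"
proof -
  obtain i j where ij: "X = {i,j}" "(i,j) \<in> Sset n k" using assms(1) unfolding Hset_def by auto
  hence "i \<le> 2*k" "2*k < j" unfolding Sset_def by auto
  thus ?thesis using ij(1) assms(2-4) by auto
qed

lemma H_P2: "Hset n k \<subseteq> P2 n"
proof
  fix X assume "X \<in> Hset n k"
  then obtain i j where ij: "X = {i,j}" "(i,j) \<in> Sset n k" unfolding Hset_def by auto
  hence "1 \<le> i" "i \<le> 2*k" "2*k < j" "j \<le> n" unfolding Sset_def by auto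
  thus "X \<in> P2 n" using ij(1) unfolding P2_def by auto
qed


lemma card_H:
  assumes "3*k \<le> n"
  shows "card (Hset n k) + k = 2*k*(n - 2*k)"
proof -
  have inj: "inj_on (\<lambda>(i,j). {i,j}) (Sset n k)"
  proof (rule inj_onI)
    fix p q assume p: "p \<in> Sset n k" and q: "q \<in> Sset n k"
      and e: "(\<lambda>(i,j). {i,j::nat}) p = (\<lambda>(i,j). {i,j}) q"
    obtain i j where pij: "p = (i,j)" by (cases p)
    obtain i' j' where qij: "q = (i',j')" by (cases q)
    have "i \<le> 2*k" "2*k < j" using p pij unfolding Sset_def by auto
    moreover have "i' \<le> 2*k" "2*k < j'" using q qij unfolding Sset_def by auto
    moreover have "{i,j} = {i',j'}" using e pij qij by simp
    ultimately have "i = i' \<and> j = j'" unfolding doubleton_eq_iff by auto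
    thus "p = q" using pij qij by simp
  qed
  have Msub: "(\<lambda>i. (i, i + 2*k)) ` {1..k} \<subseteq> {1..2*k} \<times> {2*k+1..n}" using assms by auto
  have cM: "card ((\<lambda>i. (i, i + 2*k)) ` {1..k}) = k"
    by (subst card_image) (auto simp: inj_on_def)
  have "card (Sset n k) = card ({1..2*k} \<times> {2*k+1..n}) - k"
    unfolding Sset_def using Msub cM by (simp add: card_Diff_subset)
  moreover have "card ({1..2*k} \<times> {2*k+1..n}) = 2*k*(n - 2*k)" by (simp add: card_cartesian_product)
  moreover have "k \<le> 2*k*(n - 2*k)"
  proof (cases "k = 0")
    case False
    hence "1 \<le> n - 2*k" using assms by simp
    hence "k * 1 \<le> 2*k*(n - 2*k)" by (intro mult_le_mono) auto
    thus ?thesis by simp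
  qed simp
  ultimately show ?thesis using card_image[OF inj] unfolding Hset_def by simp
qed

lemma card_H4:
  assumes "k > 0" "n = 4*k \<or> n = 4*k+1"
  shows "4 * card (Hset n k) = n * (n - 1)"
proof -
  have "3*k \<le> n" using assms by auto
  note c = card_H[OF this]
  show ?thesis using assms(2)
  proof
    assume n: "n = 4*k"
    have "card (Hset n k) + k = 4*k*k" using c n by (simp add: algebra_simps)
    hence "4 * card (Hset n k) = 16*k*k - 4*k" by simp
    moreover have "n * (n - 1) = 16*k*k - 4*k" using n by (simp add: algebra_simps diff_mult_distrib2)
    ultimately show ?thesis by simp
  next
    assume n: "n = 4*k+1"
    have "card (Hset n k) + k = 4*k*k + 2*k" using c n by (simp add: algebra_simps)
    hence "4 * card (Hset n k) = 16*k*k + 4*k" by simp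
    moreover have "n * (n - 1) = 16*k*k + 4*k" using n by (simp add: algebra_simps)
    ultimately show ?thesis by simp
  qed
qed

definition Gset :: "nat \<Rightarrow> nat \<Rightarrow> nat set set" where
  "Gset n k = P2 n - Hset n k"

lemma cover:
  assumes "k > 0" "n = 4*k \<or> n = 4*k+1" "v \<in> {1..n}"
  shows "\<exists>g\<in>Gset n k. v \<in> g"
proof (cases "v \<le> 2*k")
  case True
  define w where "w = (if v = 1 then 2 else (1::nat))"
  have w: "w \<noteq> v" "w \<le> 2*k" "1 \<le> w" using True assms unfolding w_def by auto
  have "{v,w} \<in> P2 n" using w assms True unfolding P2_def by auto
  moreover have "{v,w} \<notin> Hset n k"
    using cross[of "{v,w}" n k v w] w True by auto
  ultimately show ?thesis unfolding Gset_def by auto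
next
  case False
  define w where "w = (if v = 2*k+1 then 2*k+2 else 2*k+1)"
  have w: "w \<noteq> v" "\<not> w \<le> 2*k" "w \<le> n" using False assms unfolding w_def by auto
  have "{v,w} \<in> P2 n" using w assms False unfolding P2_def by auto
  moreover have "{v,w} \<notin> Hset n k"
    using cross[of "{v,w}" n k v w] w False by auto
  ultimately show ?thesis unfolding Gset_def by auto
qed

lemma card2_finite: "card g = 2 \<Longrightarrow> finite g"
  by (metis card.infinite zero_neq_numeral)

lemma G_card2: "g \<in> Gset n k \<Longrightarrow> card g = 2"
  unfolding Gset_def P2_def by auto

lemma no_triangle:
  assumes "F \<in> SR_complex n (Gset n k)" "card F \<ge> 3"
  shows False
proof -
  have FS: "F \<subseteq> {1..n}" "\<not> (\<exists>g\<in>Gset n k. g \<subseteq> F)"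
    using assms(1) unfolding SR_complex_def sqfree_monomials_def in_monomial_ideal_def by auto
  obtain T where T: "T \<subseteq> F" "card T = 3" using obtain_subset_with_card_n[OF assms(2)] by metis
  then obtain x y z where xyz: "T = {x,y,z}" "x \<noteq> y" "y \<noteq> z" "x \<noteq> z"
    using card_3_iff by metis
  have inH: "\<And>a b. a \<in> F \<Longrightarrow> b \<in> F \<Longrightarrow> a \<noteq> b \<Longrightarrow> (a \<le> 2*k) \<noteq> (b \<le> 2*k)"
  proof -
    fix a b assume ab: "a \<in> F" "b \<in> F" "a \<noteq> b"
    have "{a,b} \<in> P2 n" using ab FS unfolding P2_def by auto
    moreover have "{a,b} \<notin> Gset n k" using FS ab by auto
    ultimately have "{a,b} \<in> Hset n k" unfolding Gset_def by auto
    thus "(a \<le> 2*k) \<noteq> (b \<le> 2*k)" using cross[of "{a,b}" n k a b] ab by auto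
  qed
  have "x \<in> F" "y \<in> F" "z \<in> F" using T xyz by auto
  thus False using inH[of x y] inH[of y z] inH[of x z] xyz by blast
qed

lemma G_in_V:
  assumes "k > 0" "n = 4*k \<or> n = 4*k+1"
  shows "Gset n k \<in> V n 2"
proof -
  let ?G = "Gset n k"
  have sub: "?G \<subseteq> P2 n" unfolding Gset_def by auto
  have c2: "\<forall>g\<in>?G. card g = 2" using G_card2 by auto
  have gen: "sqfree_gen_set n ?G"
    unfolding sqfree_gen_set_def sqfree_monomials_def
  proof
    show "?G \<subseteq> Pow {1..n}" using sub unfolding P2_def by auto
    show "\<forall>g\<in>?G. \<forall>h\<in>?G. g \<subseteq> h \<longrightarrow> g = h"
    proof (intro ballI impI)
      fix g h assume gh: "g \<in> ?G" "h \<in> ?G" "g \<subseteq> h"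
      have "card g = 2" "card h = 2" using gh c2 by auto
      thus "g = h" using card_subset_eq[OF card2_finite[OF \<open>card h = 2\<close>] gh(3)] by simp
    qed
  qed
  have ne: "?G \<noteq> {}" using cover[OF assms, of 1] assms by auto
  have fv: "fnum (facet_complex ?G) m = fnum (SR_complex n ?G) m" for m
  proof (cases "m = 2")
    case True
    have "P2 n - ?G = Hset n k" using H_P2 unfolding Gset_def by auto
    hence e: "{F \<in> SR_complex n ?G. card F = 2} = Hset n k" using SR2[OF sub] by simp
    have "card ?G = card (P2 n) - card (Hset n k)"
      unfolding Gset_def by (rule card_Diff_subset[OF finite_subset[OF H_P2 finite_P2] H_P2])
    hence "card ?G = card (Hset n k)" using card_H4[OF assms] card_P2[of n] by simp
    thus ?thesis using True e facet2[OF c2] unfolding fnum_def by simp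
  next
    case False
    have "{F \<in> facet_complex ?G. card F = m} = {F \<in> SR_complex n ?G. card F = m}"
    proof (intro set_eqI iffI)
      fix F assume F: "F \<in> {F \<in> facet_complex ?G. card F = m}"
      then obtain g where g: "g \<in> ?G" "F \<subseteq> g" "card F = m" unfolding facet_complex_def by auto
      have cg: "card g = 2" using g c2 by auto
      hence fg: "finite g" using card2_finite by auto
      have "F \<noteq> g" using g cg False by auto
      hence "card F < 2" using psubset_card_mono[OF fg] g cg by auto
      moreover have fF: "finite F" using finite_subset[OF g(2) fg] .
      ultimately have "card F = 0 \<or> card F = 1" by linarith
      hence "F = {} \<or> (\<exists>v. F = {v})" using fF
        using card_1_singleton_iff[of F] by auto
      moreover have "F \<subseteq> {1..n}" using g sub unfolding P2_def by auto
      moreover have "\<not> (\<exists>h\<in>?G. h \<subseteq> F)"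
      proof
        assume "\<exists>h\<in>?G. h \<subseteq> F"
        then obtain h where "h \<in> ?G" "h \<subseteq> F" by auto
        hence "card h \<le> card F" using card_mono[OF finite_subset[OF g(2) fg]] by simp
        thus False using \<open>card F < 2\<close> c2 \<open>h \<in> ?G\<close> by auto
      qed
      ultimately show "F \<in> {F \<in> SR_complex n ?G. card F = m}"
        using g unfolding SR_complex_def sqfree_monomials_def in_monomial_ideal_def by auto
    next
      fix F assume F: "F \<in> {F \<in> SR_complex n ?G. card F = m}"
      have Fs: "F \<subseteq> {1..n}" using F unfolding SR_complex_def sqfree_monomials_def by auto
      have fin: "finite F" using Fs finite_subset by blast
      have "m < 3"
      proof (rule ccontr)
        assume "\<not> m < 3"
        hence "card F \<ge> 3" using F by simp
        thus False using no_triangle[of F n k] F by blast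
      qed
      hence "card F = 0 \<or> card F = 1" using F False by auto
      hence "F = {} \<or> (\<exists>v. F = {v})" using fin using card_1_singleton_iff[of F] by auto
      moreover {
        assume "F = {}" hence "F \<in> facet_complex ?G" using ne unfolding facet_complex_def by auto }
      moreover {
        fix v assume "F = {v}"
        hence "v \<in> {1..n}" using Fs by auto
        then obtain g where "g \<in> ?G" "v \<in> g" using cover[OF assms] by blast
        hence "F \<in> facet_complex ?G" using \<open>F = {v}\<close> unfolding facet_complex_def by auto }
      ultimately show "F \<in> {F \<in> facet_complex ?G. card F = m}" using F by blast
    qed
    thus ?thesis unfolding fnum_def by simp
  qed
  show ?thesis unfolding V_def f_ideal_def same_f_vector_def using gen c2 fv by auto
qed

theorem proposition3p3:
  fixes n :: nat
  assumes "n > 0"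
  shows "V n 2 \<noteq> {} \<longleftrightarrow> (\<exists>k::nat. k > 0 \<and> (n = 4 * k \<or> n = 4 * k + 1))"
proof
  assume "V n 2 \<noteq> {}"
  then obtain G where G: "G \<in> V n 2" by auto
  note c = converse_aux[OF G]
  have "finite G" using V_P2[OF G] finite_P2 finite_subset by blast
  hence "card G \<ge> 1" using c by (simp add: Suc_le_eq card_gt_0_iff)
  thus "\<exists>k::nat. k > 0 \<and> (n = 4 * k \<or> n = 4 * k + 1)" using arith_conv c by blast
next
  assume "\<exists>k::nat. k > 0 \<and> (n = 4 * k \<or> n = 4 * k + 1)"
  then obtain k where "k > 0" "n = 4 * k \<or> n = 4 * k + 1" by auto
  thus "V n 2 \<noteq> {}" using G_in_V by blast
qed

end
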